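(* Let $M$ be a finite abelian group of order $m$, $J\colon M\times M\to\mathbf{C}$, $c\in\hat{M}$ with $c^2=1$, and $i\colon\hat{M}\setminus\{c\}\to\hat{M}\setminus\{1\}$ a bijection with $i(x)=x\,i(x^{-1})$ for all $x\ne c$, such that $J(\alpha,\beta)=\frac{1}{m}\sum_{x\in\hat{M}\setminus\{c\}}\alpha(i(x))\beta(i(x)x^{-1})$ for all $\alpha,\beta\in M$. Let $F=\hat{M}\sqcup\{0\}$ with the operation $\oplus$ for which $0$ is the identity and, for $x,y\ne0$, $x\oplus y=0$ if $x=cy$ and $x\oplus y=x\,i(x/y)^{-1}$ otherwise. Then \[ J(\alpha,\beta)=\frac{1}{m}\sum_{\substack{x\oplus y=1,\\ x,y\in F\setminus\{0\}}}\alpha(x)\beta(y)\quad\text{for all }\alpha,\beta\in M. \]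
   Context: $\hat{M}$ is the Pontryagin dual of $M$, written multiplicatively with identity $1$; for $\alpha\in M$, $x\in\hat{M}$, $\alpha(x)$ is the value of the character $x$ at $\alpha$. (In the paper, $J$ is a Jacobi function, but this is not used.) *)

theory Defs
  imports Complex_Main "HOL-Algebra.Group"
begin

text \<open>Pontryagin dual of a finite abelian group M: characters M \<rightarrow> S^1,
  represented as functions on the carrier, extended by 1 outside the carrier.\<close>
definition dual :: "('a, 'b) monoid_scheme \<Rightarrow> ('a \<Rightarrow> complex) set" where
  "dual M = {\<chi>. (\<forall>a\<in>carrier M. \<forall>b\<in>carrier M. \<chi> (a \<otimes>\<^bsub>M\<^esub> b) = \<chi> a * \<chi> b)
              \<and> (\<forall>a\<in>carrier M. cmod (\<chi> a) = 1)
              \<and> (\<forall>a. a \<notin> carrier M \<longrightarrow> \<chi> a = 1)}"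

definition char_mult :: "('a \<Rightarrow> complex) \<Rightarrow> ('a \<Rightarrow> complex) \<Rightarrow> ('a \<Rightarrow> complex)" where
  "char_mult x y = (\<lambda>a. x a * y a)"

definition char_one :: "'a \<Rightarrow> complex" where
  "char_one = (\<lambda>a. 1)"

definition char_inv :: "('a \<Rightarrow> complex) \<Rightarrow> ('a \<Rightarrow> complex)" where
  "char_inv x = (\<lambda>a. inverse (x a))"

text \<open>The operation on F = dual M \<sqcup> {0}; None plays the role of 0.\<close>
definition F_oplus :: "('a \<Rightarrow> complex) \<Rightarrow> (('a \<Rightarrow> complex) \<Rightarrow> ('a \<Rightarrow> complex))
    \<Rightarrow> ('a \<Rightarrow> complex) option \<Rightarrow> ('a \<Rightarrow> complex) option \<Rightarrow> ('a \<Rightarrow> complex) option" where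
  "F_oplus c i u v = (case (u, v) of
      (None, _) \<Rightarrow> v
    | (_, None) \<Rightarrow> u
    | (Some x, Some y) \<Rightarrow>
        (if x = char_mult c y then None
         else Some (char_mult x (char_inv (i (char_mult x (char_inv y)))))))"

end

theory Submission
  imports Defs
begin

lemma dual_nz: "\<chi> \<in> dual M \<Longrightarrow> \<chi> a \<noteq> 0"
  unfolding dual_def by (cases "a \<in> carrier M") auto

lemma mult_dual: "x \<in> dual M \<Longrightarrow> y \<in> dual M \<Longrightarrow> char_mult x y \<in> dual M"
  unfolding dual_def char_mult_def by (auto simp: norm_mult)

lemma inv_dual: "x \<in> dual M \<Longrightarrow> char_inv x \<in> dual M"
  unfolding dual_def char_inv_def by (auto simp: norm_inverse)

lemma F_one: "F_oplus c i (Some x) (Some y) = Some char_one \<longleftrightarrow>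
   x \<noteq> char_mult c y \<and> char_mult x (char_inv (i (char_mult x (char_inv y)))) = char_one"
  unfolding F_oplus_def by auto

theorem mainTheorem10:
  fixes M :: "('a, 'b) monoid_scheme"
    and J :: "'a \<Rightarrow> 'a \<Rightarrow> complex"
    and c :: "'a \<Rightarrow> complex"
    and i :: "('a \<Rightarrow> complex) \<Rightarrow> ('a \<Rightarrow> complex)"
  assumes "comm_group M"
    and "finite (carrier M)"
    and "c \<in> dual M"
    and "char_mult c c = char_one"
    and "bij_betw i (dual M - {c}) (dual M - {char_one})"
    and "\<forall>x\<in>dual M - {c}. i x = char_mult x (i (char_inv x))"
    and "\<forall>\<alpha>\<in>carrier M. \<forall>\<beta>\<in>carrier M.
           J \<alpha> \<beta> = (1 / of_nat (card (carrier M))) *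
             (\<Sum>x\<in>dual M - {c}. i x \<alpha> * char_mult (i x) (char_inv x) \<beta>)"
  shows "\<forall>\<alpha>\<in>carrier M. \<forall>\<beta>\<in>carrier M.
           J \<alpha> \<beta> = (1 / of_nat (card (carrier M))) *
             (\<Sum>(x, y)\<in>{(x, y). x \<in> dual M \<and> y \<in> dual M \<and>
                   F_oplus c i (Some x) (Some y) = Some char_one}. x \<alpha> * y \<beta>)"
proof -
  define g where "g = (\<lambda>z. (i z, char_mult (i z) (char_inv z)))"
  define S where "S = {(x, y). x \<in> dual M \<and> y \<in> dual M \<and>
                   F_oplus c i (Some x) (Some y) = Some char_one}"
  have iz: "i z \<in> dual M" if "z \<in> dual M - {c}" for z
    using assms(5) that by (auto simp: bij_betw_def)
  have inj: "inj_on g (dual M - {c})"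
  proof (rule inj_onI)
    fix z w assume z: "z \<in> dual M - {c}" and w: "w \<in> dual M - {c}" and e: "g z = g w"
    then have e1: "i z = i w" and e2: "char_mult (i z) (char_inv z) = char_mult (i w) (char_inv w)"
      by (auto simp: g_def)
    show "z = w"
    proof
      fix a
      have "i z a * inverse (z a) = i w a * inverse (w a)"
        using fun_cong[OF e2, of a] by (simp add: char_mult_def char_inv_def)
      then show "z a = w a" using e1 dual_nz[OF iz[OF z]] dual_nz[of z M a] dual_nz[of w M a] z w
        by (auto simp: field_simps)
    qed
  qed
  have img: "S = g ` (dual M - {c})"
  proof
    show "g ` (dual M - {c}) \<subseteq> S"
    proof
      fix p assume "p \<in> g ` (dual M - {c})"
      then obtain z where z: "z \<in> dual M - {c}" and p: "p = g z" by auto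
      have izd: "i z \<in> dual M" using iz[OF z] .
      have zd: "z \<in> dual M" using z by auto
      have yd: "char_mult (i z) (char_inv z) \<in> dual M" using izd zd mult_dual inv_dual by blast
      have q: "char_mult (i z) (char_inv (char_mult (i z) (char_inv z))) = z"
      proof
        fix a show "char_mult (i z) (char_inv (char_mult (i z) (char_inv z))) a = z a"
          using dual_nz[OF izd, of a] dual_nz[OF zd, of a]
          by (simp add: char_mult_def char_inv_def field_simps)
      qed
      have ne: "i z \<noteq> char_mult c (char_mult (i z) (char_inv z))"
      proof
        assume h: "i z = char_mult c (char_mult (i z) (char_inv z))"
        have "z = c"
        proof
          fix a
          have "i z a = c a * (i z a * inverse (z a))"
            using fun_cong[OF h, of a] by (simp add: char_mult_def char_inv_def)
          then show "z a = c a" using dual_nz[OF izd, of a] dual_nz[OF zd, of a]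
            by (simp add: field_simps)
        qed
        then show False using z by auto
      qed
      have o2: "char_mult (i z) (char_inv (i z)) = char_one"
      proof
        fix a show "char_mult (i z) (char_inv (i z)) a = char_one a"
          using dual_nz[OF izd, of a] by (simp add: char_mult_def char_inv_def char_one_def)
      qed
      show "p \<in> S" unfolding S_def p g_def using izd yd ne q o2 by (simp add: F_one)
    qed
  next
    show "S \<subseteq> g ` (dual M - {c})"
    proof
      fix p assume "p \<in> S"
      then obtain x y where p: "p = (x, y)" and xd: "x \<in> dual M" and yd: "y \<in> dual M"
        and ne: "x \<noteq> char_mult c y"
        and h: "char_mult x (char_inv (i (char_mult x (char_inv y)))) = char_one"
        unfolding S_def by (auto simp: F_one)
      define z where "z = char_mult x (char_inv y)"
      have zd: "z \<in> dual M" unfolding z_def using xd yd mult_dual inv_dual by blast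
      have zc: "z \<noteq> c"
      proof
        assume "z = c"
        then have "x = char_mult c y"
          by (auto simp: z_def char_mult_def char_inv_def fun_eq_iff dual_nz[OF yd] field_simps)
        then show False using ne by simp
      qed
      have izd: "i z \<in> dual M" using iz zd zc by auto
      have ix: "i z = x"
      proof
        fix a
        have "x a * inverse (i z a) = 1"
          using fun_cong[OF h, of a] by (simp add: z_def char_mult_def char_inv_def char_one_def)
        then show "i z a = x a" using dual_nz[OF izd, of a] by (simp add: field_simps)
      qed
      have yy: "y = char_mult (i z) (char_inv z)"
      proof
        fix a show "y a = char_mult (i z) (char_inv z) a"
          unfolding ix using dual_nz[OF yd, of a] dual_nz[OF xd, of a]
          by (simp add: z_def char_mult_def char_inv_def field_simps)
      qed
      show "p \<in> g ` (dual M - {c})" using p ix yy zd zc by (auto simp: g_def)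
    qed
  qed
  have "(\<Sum>(x, y)\<in>S. x \<alpha> * y \<beta>) = (\<Sum>x\<in>dual M - {c}. i x \<alpha> * char_mult (i x) (char_inv x) \<beta>)"
    for \<alpha> \<beta>
    unfolding img by (subst sum.reindex[OF inj]) (simp add: g_def)
  then show ?thesis using assms(7) unfolding S_def by simp
qed

end
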